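(* Let $(S,M)$ be a surface with marked points and empty boundary, and let $T$ be an ideal triangulation of $(S,M)$ such that at each puncture there are at least three incident arcs of $T$ (an arc with both ends at the same puncture counted twice). Let $Q$ be the adjacency quiver of $T$ and let $f,g:Q_1\to Q_1$ be the maps defined below. Then: (a) the $f$-orbits on $Q_1$ all have size $3$, and they are in one-to-one correspondence with the triangles of $T$; (b) the $g$-orbits on $Q_1$ all have size at least $3$, and they are in one-to-one correspondence with the punctures.
   Context: $(S,M)$: $S$ compact, connected, oriented surface without boundary, $M$ a finite non-empty set of punctures. The adjacency quiver $Q$ has the arcs of $T$ as vertices and an arrow $i\to j$ for each puncture $p$ and each occurrence of arcs $i,j$ incident to $p$ with $j$ immediately following $i$ in counterclockwise order around $p$; such an arrow corresponds to a corner at $p$ of a triangle of $T$ with sides $i$ and $j$. For an arrow $\alpha:i\to j$ at puncture $p$, let $q$ be the puncture at the other end of $j$ (the end of $j$ not used by this corner) and $k$ the third side of that triangle, which follows $j$ counterclockwise around $q$; define $f(\alpha)$ to be the arrow $j\to k$ at $q$. Define $g(\alpha)$ to be the arrow $j\to \ell$ at $p$, where $\ell$ is the arc immediately following $j$ in counterclockwise order around $p$. The $f$-orbit (resp. $g$-orbit) of $\alpha$ is $\{f^m(\alpha):m\in\mathbb{Z}\}$ (resp. $\{g^m(\alpha):m\in\mathbb{Z}\}$). *)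

theory Defs
  imports Main
begin

text \<open>
Combinatorial model of an ideal triangulation T of a punctured surface (S,M)
with empty boundary.  The triangles of T are cut apart; every triangle has three
sides, each oriented as part of the counterclockwise boundary of its triangle.
These oriented sides ("darts") form the finite set D.
  nxt x : the next side of the same triangle, in counterclockwise order
          (it starts where x ends);
  opp x : the side of the (possibly same) triangle glued to x along the arc
          of x, with opposite orientation.
Gluing the triangles along opp gives a compact oriented surface without boundary;
its vertices are the punctures M.  Connectedness of S is connectedness of the gluing.
The dart x also names the corner of its triangle at the endpoint (head) of x,
which lies between the sides x and nxt x.
\<close>

definition ideal_triangulation :: "'d set \<Rightarrow> ('d \<Rightarrow> 'd) \<Rightarrow> ('d \<Rightarrow> 'd) \<Rightarrow> bool" where
  "ideal_triangulation D nxt opp \<longleftrightarrow>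
     finite D \<and> D \<noteq> {} \<and>
     (\<forall>x\<in>D. nxt x \<in> D \<and> nxt x \<noteq> x \<and> nxt (nxt (nxt x)) = x) \<and>
     (\<forall>x\<in>D. opp x \<in> D \<and> opp x \<noteq> x \<and> opp (opp x) = x) \<and>
     (\<forall>x\<in>D. \<forall>y\<in>D. (x, y) \<in> ({(u, nxt u) | u. u \<in> D} \<union> {(u, opp u) | u. u \<in> D})\<^sup>*)"

definition arc_of :: "('d \<Rightarrow> 'd) \<Rightarrow> 'd \<Rightarrow> 'd set" where
  "arc_of opp x = {x, opp x}"

definition arcs :: "'d set \<Rightarrow> ('d \<Rightarrow> 'd) \<Rightarrow> 'd set set" where
  "arcs D opp = arc_of opp ` D"

definition tri_rel :: "'d set \<Rightarrow> ('d \<Rightarrow> 'd) \<Rightarrow> ('d \<times> 'd) set" where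
  "tri_rel D nxt = ({(u, nxt u) | u. u \<in> D} \<union> {(nxt u, u) | u. u \<in> D})\<^sup>*"

definition triangles :: "'d set \<Rightarrow> ('d \<Rightarrow> 'd) \<Rightarrow> 'd set set" where
  "triangles D nxt = (\<lambda>x. tri_rel D nxt `` {x}) ` D"

text \<open>Punctures: the end point (head) of dart x is identified by the gluing with the
  start point of opp x, i.e. with the head of the side nxt (nxt (opp x)) that precedes
  opp x in its triangle.  A puncture is an equivalence class of darts under the
  identification of their heads; puncture_of x is the puncture at the head of x
  (the puncture of the corner x).\<close>
definition vert_rel :: "'d set \<Rightarrow> ('d \<Rightarrow> 'd) \<Rightarrow> ('d \<Rightarrow> 'd) \<Rightarrow> ('d \<times> 'd) set" where
  "vert_rel D nxt opp =
     ({(u, nxt (nxt (opp u))) | u. u \<in> D} \<union> {(nxt (nxt (opp u)), u) | u. u \<in> D})\<^sup>*"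

definition puncture_of :: "'d set \<Rightarrow> ('d \<Rightarrow> 'd) \<Rightarrow> ('d \<Rightarrow> 'd) \<Rightarrow> 'd \<Rightarrow> 'd set" where
  "puncture_of D nxt opp x = vert_rel D nxt opp `` {x}"

definition punctures :: "'d set \<Rightarrow> ('d \<Rightarrow> 'd) \<Rightarrow> ('d \<Rightarrow> 'd) \<Rightarrow> 'd set set" where
  "punctures D nxt opp = puncture_of D nxt opp ` D"

text \<open>Number of arcs incident to puncture p, an arc with both ends at p counted twice:
  the arc ends are the darts (the arc {x, opp x} has its ends at the heads of x and
  of opp x).\<close>
definition incident_count :: "'d set \<Rightarrow> ('d \<Rightarrow> 'd) \<Rightarrow> ('d \<Rightarrow> 'd) \<Rightarrow> 'd set \<Rightarrow> nat" where
  "incident_count D nxt opp p = card {x \<in> D. puncture_of D nxt opp x = p}"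

text \<open>Adjacency quiver Q: vertices are the arcs, arrows Q_1 are the corners, i.e. D.
  The corner x lies at puncture head x between the sides x and nxt x; going
  counterclockwise around that puncture inside the triangle one passes from the arc
  of nxt x to the arc of x, so the arrow x goes from arc(nxt x) to arc(x).\<close>
definition Q1 :: "'d set \<Rightarrow> 'd set" where "Q1 D = D"
definition arr_src :: "('d \<Rightarrow> 'd) \<Rightarrow> ('d \<Rightarrow> 'd) \<Rightarrow> 'd \<Rightarrow> 'd set" where
  "arr_src nxt opp x = arc_of opp (nxt x)"
definition arr_tgt :: "('d \<Rightarrow> 'd) \<Rightarrow> 'd \<Rightarrow> 'd set" where
  "arr_tgt opp x = arc_of opp x"

text \<open>f(alpha) for alpha : i -> j at p (corner x, j = arc of x): the other end q of j
  (in the triangle of alpha) is the start of x, i.e. the head of nxt (nxt x); the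
  corner of the same triangle at q lies between the sides nxt (nxt x) and x and is the
  arrow j -> k, k the third side.\<close>
definition f_map :: "('d \<Rightarrow> 'd) \<Rightarrow> 'd \<Rightarrow> 'd" where
  "f_map nxt x = nxt (nxt x)"

text \<open>g(alpha) for alpha : i -> j at p: crossing the arc j counterclockwise around p
  one enters the triangle of opp x; its corner at p lies between the sides
  nxt (nxt (opp x)) (ending at p) and opp x, and is the arrow j -> l at p.\<close>
definition g_map :: "('d \<Rightarrow> 'd) \<Rightarrow> ('d \<Rightarrow> 'd) \<Rightarrow> 'd \<Rightarrow> 'd" where
  "g_map nxt opp x = nxt (nxt (opp x))"

definition zpow :: "'d set \<Rightarrow> ('d \<Rightarrow> 'd) \<Rightarrow> int \<Rightarrow> 'd \<Rightarrow> 'd" where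
  "zpow D h m = (if 0 \<le> m then h ^^ nat m else inv_into D h ^^ nat (- m))"

definition orbit :: "'d set \<Rightarrow> ('d \<Rightarrow> 'd) \<Rightarrow> 'd \<Rightarrow> 'd set" where
  "orbit D h a = {zpow D h m a | m. True}"

end

theory Submission
  imports Defs
begin

lemma iter_in: "\<forall>y\<in>D. k y \<in> D \<Longrightarrow> x\<in>D \<Longrightarrow> (k^^n) x \<in> D"
  by (induction n) auto

lemma perm_facts:
  assumes b: "bij_betw h D D" and y: "y \<in> D"
  shows "h y \<in> D" "inv_into D h y \<in> D" "h (inv_into D h y) = y" "inv_into D h (h y) = y"
  using b y by (auto simp: bij_betw_def inv_into_into f_inv_into_f inv_into_f_f)

lemma zpow_in:
  assumes b: "bij_betw h D D" and x: "x \<in> D"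
  shows "zpow D h m x \<in> D"
proof -
  have "\<forall>y\<in>D. h y \<in> D" "\<forall>y\<in>D. inv_into D h y \<in> D" using perm_facts[OF b] by auto
  then show ?thesis unfolding zpow_def using iter_in x by auto
qed

lemma zpow_succ:
  assumes b: "bij_betw h D D" and x: "x \<in> D"
  shows "zpow D h (m+1) x = h (zpow D h m x)"
proof (cases "0 \<le> m")
  case True
  then have "nat (m+1) = Suc (nat m)" by simp
  then show ?thesis using True by (simp add: zpow_def)
next
  case False
  define k where "k = nat (-m-1)"
  have k: "nat (-m) = Suc k" "nat (-(m+1)) = k" using False unfolding k_def by arith+
  have inD: "(inv_into D h ^^ k) x \<in> D"
    using iter_in[of D "inv_into D h"] perm_facts(2)[OF b] x by auto
  show ?thesis using False k perm_facts(3)[OF b inD]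
    by (auto simp: zpow_def)
qed

lemma zpow_pred:
  assumes b: "bij_betw h D D" and x: "x \<in> D"
  shows "zpow D h (m-1) x = inv_into D h (zpow D h m x)"
proof (cases "m \<le> 0")
  case True
  then have "nat (-(m-1)) = Suc (nat (-m))" by simp
  then show ?thesis using True by (simp add: zpow_def)
next
  case False
  define k where "k = nat (m-1)"
  have k: "nat m = Suc k" "nat (m-1) = k" using False unfolding k_def by arith+
  have inD: "(h ^^ k) x \<in> D"
    using iter_in[of D h] perm_facts(1)[OF b] x by auto
  show ?thesis using False k perm_facts(4)[OF b inD]
    by (auto simp: zpow_def)
qed

lemma orbitI: "y = zpow D h m a \<Longrightarrow> y \<in> orbit D h a"
  unfolding orbit_def by blast

lemma edge1: "u \<in> D \<Longrightarrow> (u, h u) \<in> ({(u, h u)|u. u\<in>D} \<union> {(h u,u)|u. u\<in>D})\<^sup>*"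
  by (rule r_into_rtrancl) blast

lemma edge2: "u \<in> D \<Longrightarrow> (h u, u) \<in> ({(u, h u)|u. u\<in>D} \<union> {(h u,u)|u. u\<in>D})\<^sup>*"
  by (rule r_into_rtrancl) blast

lemma orbit_rel:
  assumes b: "bij_betw h D D" and x: "x \<in> D"
  shows "orbit D h x = ({(u, h u)|u. u\<in>D} \<union> {(h u,u)|u. u\<in>D})\<^sup>* `` {x}"
    (is "_ = ?R `` {x}")
proof
  show "orbit D h x \<subseteq> ?R `` {x}"
  proof
    fix y assume "y \<in> orbit D h x"
    then obtain m where y: "y = zpow D h m x" by (auto simp: orbit_def)
    have "(x, zpow D h m x) \<in> ?R"
    proof (induction m rule: int_induct[of _ 0])
      case base then show ?case by (simp add: zpow_def)
    next
      case (step1 i)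
      have z: "zpow D h i x \<in> D" using zpow_in[OF b x] .
      have "(x, h (zpow D h i x)) \<in> ?R" by (rule rtrancl_trans[OF step1(2) edge1[OF z]])
      then show ?case using zpow_succ[OF b x, of i] by simp
    next
      case (step2 i)
      have z: "zpow D h i x \<in> D" using zpow_in[OF b x] .
      have "(h (inv_into D h (zpow D h i x)), inv_into D h (zpow D h i x)) \<in> ?R"
        by (rule edge2[OF perm_facts(2)[OF b z]])
      then have "(zpow D h i x, inv_into D h (zpow D h i x)) \<in> ?R"
        using perm_facts(3)[OF b z] by simp
      then have "(x, inv_into D h (zpow D h i x)) \<in> ?R" by (rule rtrancl_trans[OF step2(2)])
      then show ?case using zpow_pred[OF b x, of i] by simp
    qed
    then show "y \<in> ?R `` {x}" using y by simp
  qed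
next
  show "?R `` {x} \<subseteq> orbit D h x"
  proof
    fix y assume "y \<in> ?R `` {x}"
    then have "(x, y) \<in> ?R" by simp
    then show "y \<in> orbit D h x"
    proof (induction rule: rtrancl_induct)
      case base
      show ?case by (rule orbitI[of _ _ _ 0]) (simp add: zpow_def)
    next
      case (step y z)
      from step.IH obtain m where m: "y = zpow D h m x" by (auto simp: orbit_def)
      from step.hyps(2) show ?case
      proof
        assume "(y, z) \<in> {(u, h u)|u. u\<in>D}"
        then have "z = h y" by auto
        then have "z = zpow D h (m+1) x" using zpow_succ[OF b x, of m] m by simp
        then show ?thesis by (rule orbitI)
      next
        assume "(y, z) \<in> {(h u, u)|u. u\<in>D}"
        then obtain u where "y = h u" "z = u" "u \<in> D" by auto
        then have "z = inv_into D h y" using perm_facts(4)[OF b] by simp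
        then have "z = zpow D h (m-1) x" using zpow_pred[OF b x, of m] m by simp
        then show ?thesis by (rule orbitI)
      qed
    qed
  qed
qed

lemma bij3:
  assumes h: "\<forall>y\<in>D. h y \<in> D \<and> h (h (h y)) = y"
  shows "bij_betw h D D"
  unfolding bij_betw_def
proof
  show "inj_on h D"
  proof (rule inj_onI)
    fix a b assume "a \<in> D" "b \<in> D" "h a = h b"
    then show "a = b" using h by metis
  qed
  show "h ` D = D"
  proof
    show "h ` D \<subseteq> D" using h by auto
    show "D \<subseteq> h ` D"
    proof
      fix y assume "y \<in> D"
      then have "y = h (h (h y))" "h (h y) \<in> D" using h by auto
      then show "y \<in> h ` D" by blast
    qed
  qed
qed

lemma bij2:
  assumes h: "\<forall>y\<in>D. h y \<in> D \<and> h (h y) = y"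
  shows "bij_betw h D D"
  unfolding bij_betw_def
proof
  show "inj_on h D"
  proof (rule inj_onI)
    fix a b assume "a \<in> D" "b \<in> D" "h a = h b"
    then show "a = b" using h by metis
  qed
  show "h ` D = D"
  proof
    show "h ` D \<subseteq> D" using h by auto
    show "D \<subseteq> h ` D"
    proof
      fix y assume "y \<in> D"
      then have "y = h (h y)" "h y \<in> D" using h by auto
      then show "y \<in> h ` D" by blast
    qed
  qed
qed

lemma orbit3:
  assumes h: "\<forall>y\<in>D. h y \<in> D \<and> h (h (h y)) = y" and x: "x \<in> D"
  shows "orbit D h x = {x, h x, h (h x)}"
proof
  have b: "bij_betw h D D" using bij3[OF h] .
  have inv: "inv_into D h y = h (h y)" if "y \<in> D" for y
  proof -
    have "h (h y) \<in> D" using h that by auto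
    then have "inv_into D h (h (h (h y))) = h (h y)" using perm_facts(4)[OF b] by blast
    then show ?thesis using h that by simp
  qed
  show "orbit D h x \<subseteq> {x, h x, h (h x)}"
  proof
    fix y assume "y \<in> orbit D h x"
    then obtain m where y: "y = zpow D h m x" by (auto simp: orbit_def)
    have "zpow D h m x \<in> {x, h x, h (h x)}"
    proof (induction m rule: int_induct[of _ 0])
      case base then show ?case by (simp add: zpow_def)
    next
      case (step1 i) then show ?case using zpow_succ[OF b x, of i] h x by auto
    next
      case (step2 i) then show ?case using zpow_pred[OF b x, of i] h x inv
        by (auto simp: inv)
    qed
    then show "y \<in> {x, h x, h (h x)}" using y by simp
  qed
  show "{x, h x, h (h x)} \<subseteq> orbit D h x"
  proof -
    have "zpow D h 0 x = x" "zpow D h 1 x = h x" "zpow D h 2 x = h (h x)"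
      by (simp_all add: zpow_def numeral_2_eq_2)
    then show ?thesis using orbitI[of _ D h _ x] by (metis empty_subsetI insert_subset)
  qed
qed

lemma sym_R: "sym (({(u, h u)|u. u\<in>D} \<union> {(h u,u)|u. u\<in>D})\<^sup>*)"
  by (rule sym_rtrancl) (auto simp: sym_def)

lemma class_eq:
  assumes "sym r" "trans r" "(a, b) \<in> r"
  shows "r `` {a} = r `` {b}"
  using assms by (auto dest: symD transD)

theorem lemma2p3:
  fixes D :: "'d set" and nxt opp :: "'d \<Rightarrow> 'd"
  assumes T: "ideal_triangulation D nxt opp"
    and deg: "\<forall>p \<in> punctures D nxt opp. incident_count D nxt opp p \<ge> 3"
  shows "(\<forall>\<alpha> \<in> Q1 D. card (orbit D (f_map nxt) \<alpha>) = 3)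
       \<and> (\<exists>\<phi>. bij_betw \<phi> (orbit D (f_map nxt) ` Q1 D) (triangles D nxt)
              \<and> (\<forall>\<alpha> \<in> Q1 D. \<alpha> \<in> \<phi> (orbit D (f_map nxt) \<alpha>)))
       \<and> (\<forall>\<alpha> \<in> Q1 D. card (orbit D (g_map nxt opp) \<alpha>) \<ge> 3)
       \<and> (\<exists>\<psi>. bij_betw \<psi> (orbit D (g_map nxt opp) ` Q1 D) (punctures D nxt opp)
              \<and> (\<forall>\<alpha> \<in> Q1 D. \<psi> (orbit D (g_map nxt opp) \<alpha>) = puncture_of D nxt opp \<alpha>))"
proof -
  have TT: "finite D \<and> D \<noteq> {} \<and>
     (\<forall>x\<in>D. nxt x \<in> D \<and> nxt x \<noteq> x \<and> nxt (nxt (nxt x)) = x) \<and>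
     (\<forall>x\<in>D. opp x \<in> D \<and> opp x \<noteq> x \<and> opp (opp x) = x) \<and> True"
    using T unfolding ideal_triangulation_def by (metis (no_types))
  have N: "\<forall>x\<in>D. nxt x \<in> D \<and> nxt x \<noteq> x \<and> nxt (nxt (nxt x)) = x"
    using TT by (elim conjE)
  have O: "\<forall>x\<in>D. opp x \<in> D \<and> opp x \<noteq> x \<and> opp (opp x) = x"
    using TT by (elim conjE)
  have N3: "\<forall>y\<in>D. nxt y \<in> D \<and> nxt (nxt (nxt y)) = y" using N by blast
  have F3: "\<forall>y\<in>D. f_map nxt y \<in> D \<and> f_map nxt (f_map nxt (f_map nxt y)) = y"
  proof
    fix y assume y: "y \<in> D"
    have y1: "nxt y \<in> D" "nxt (nxt y) \<in> D" "nxt (nxt (nxt y)) = y" using N3 y by auto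
    have y2: "nxt (nxt (nxt (nxt (nxt (nxt y))))) = y" using y1 by simp
    show "f_map nxt y \<in> D \<and> f_map nxt (f_map nxt (f_map nxt y)) = y"
      unfolding f_map_def using y1 y2 by simp
  qed
  have bN: "bij_betw nxt D D" using bij3[OF N3] .
  have O2: "\<forall>y\<in>D. opp y \<in> D \<and> opp (opp y) = y" using O by blast
  have bO: "bij_betw opp D D" by (rule bij2[OF O2])
  have geq: "g_map nxt opp = nxt \<circ> (nxt \<circ> opp)" by (simp add: g_map_def fun_eq_iff)
  have bG: "bij_betw (g_map nxt opp) D D" unfolding geq
    by (rule bij_betw_trans[OF bij_betw_trans[OF bO bN] bN])
  have forb: "orbit D (f_map nxt) x = {x, nxt x, nxt (nxt x)}" if "x \<in> D" for x
  proof -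
    have e: "f_map nxt (f_map nxt x) = nxt x" using N that by (simp add: f_map_def)
    have "orbit D (f_map nxt) x = {x, nxt (nxt x), nxt x}"
      using orbit3[OF F3 that] unfolding e unfolding f_map_def[of nxt x] .
    also have "\<dots> = {x, nxt x, nxt (nxt x)}" by (simp only: insert_commute)
    finally show ?thesis .
  qed
  have tri: "tri_rel D nxt `` {x} = {x, nxt x, nxt (nxt x)}" if "x \<in> D" for x
    unfolding tri_rel_def orbit_rel[OF bN that, symmetric] by (rule orbit3[OF N3 that])
  have A: "\<forall>\<alpha> \<in> Q1 D. card (orbit D (f_map nxt) \<alpha>) = 3"
  proof
    fix a assume a: "a \<in> Q1 D"
    then have aD: "a \<in> D" by (simp add: Q1_def)
    have d1: "nxt a \<noteq> a" using N aD by auto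
    have d2: "nxt (nxt a) \<noteq> nxt a" using N aD by auto
    have d3: "nxt (nxt a) \<noteq> a"
    proof
      assume "nxt (nxt a) = a"
      then have "nxt (nxt (nxt a)) = nxt a" by simp
      then show False using N aD by auto
    qed
    show "card (orbit D (f_map nxt) a) = 3" using forb[OF aD] d1 d2 d3 by auto
  qed
  have B: "\<exists>\<phi>. bij_betw \<phi> (orbit D (f_map nxt) ` Q1 D) (triangles D nxt)
              \<and> (\<forall>\<alpha> \<in> Q1 D. \<alpha> \<in> \<phi> (orbit D (f_map nxt) \<alpha>))"
  proof (intro exI conjI)
    have "orbit D (f_map nxt) ` Q1 D = triangles D nxt"
      unfolding triangles_def Q1_def using forb tri by (auto intro!: image_cong)
    then show "bij_betw id (orbit D (f_map nxt) ` Q1 D) (triangles D nxt)" by simp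
    show "\<forall>\<alpha> \<in> Q1 D. \<alpha> \<in> id (orbit D (f_map nxt) \<alpha>)" using forb by (auto simp: Q1_def)
  qed
  let ?R = "vert_rel D nxt opp"
  have Req: "?R = ({(u, g_map nxt opp u)|u. u\<in>D} \<union> {(g_map nxt opp u,u)|u. u\<in>D})\<^sup>*"
    unfolding vert_rel_def g_map_def by simp
  have gorb: "orbit D (g_map nxt opp) x = puncture_of D nxt opp x" if "x \<in> D" for x
    unfolding puncture_of_def Req using orbit_rel[OF bG that] by simp
  have symR: "sym ?R" unfolding Req by (rule sym_R)
  have transR: "trans ?R" unfolding vert_rel_def by (rule trans_rtrancl)
  have C: "\<forall>\<alpha> \<in> Q1 D. card (orbit D (g_map nxt opp) \<alpha>) \<ge> 3"
  proof
    fix a assume "a \<in> Q1 D"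
    then have aD: "a \<in> D" by (simp add: Q1_def)
    have sub: "puncture_of D nxt opp a \<subseteq> D"
    proof
      fix y assume "y \<in> puncture_of D nxt opp a"
      then have "y \<in> orbit D (g_map nxt opp) a" using gorb[OF aD] by simp
      then obtain m where "y = zpow D (g_map nxt opp) m a" by (auto simp: orbit_def)
      then show "y \<in> D" using zpow_in[OF bG aD] by simp
    qed
    have "{x \<in> D. puncture_of D nxt opp x = puncture_of D nxt opp a} = puncture_of D nxt opp a"
    proof
      show "{x \<in> D. puncture_of D nxt opp x = puncture_of D nxt opp a} \<subseteq> puncture_of D nxt opp a"
      proof
        fix x assume "x \<in> {x \<in> D. puncture_of D nxt opp x = puncture_of D nxt opp a}"
        then have "puncture_of D nxt opp x = puncture_of D nxt opp a" by simp
        moreover have "x \<in> puncture_of D nxt opp x" by (simp add: puncture_of_def vert_rel_def)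
        ultimately show "x \<in> puncture_of D nxt opp a" by simp
      qed
      show "puncture_of D nxt opp a \<subseteq> {x \<in> D. puncture_of D nxt opp x = puncture_of D nxt opp a}"
        using sub class_eq[OF symR transR] unfolding puncture_of_def by auto
    qed
    moreover have "puncture_of D nxt opp a \<in> punctures D nxt opp"
      using aD by (simp add: punctures_def)
    ultimately have "card (puncture_of D nxt opp a) \<ge> 3"
      using deg unfolding incident_count_def by metis
    then show "card (orbit D (g_map nxt opp) a) \<ge> 3" using gorb[OF aD] by simp
  qed
  have E: "\<exists>\<psi>. bij_betw \<psi> (orbit D (g_map nxt opp) ` Q1 D) (punctures D nxt opp)
              \<and> (\<forall>\<alpha> \<in> Q1 D. \<psi> (orbit D (g_map nxt opp) \<alpha>) = puncture_of D nxt opp \<alpha>)"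
  proof (intro exI conjI)
    have "orbit D (g_map nxt opp) ` Q1 D = punctures D nxt opp"
      unfolding punctures_def Q1_def using gorb by (auto intro!: image_cong)
    then show "bij_betw id (orbit D (g_map nxt opp) ` Q1 D) (punctures D nxt opp)" by simp
    show "\<forall>\<alpha> \<in> Q1 D. id (orbit D (g_map nxt opp) \<alpha>) = puncture_of D nxt opp \<alpha>"
      using gorb by (auto simp: Q1_def)
  qed
  show ?thesis using A B C E by blast
qed

end
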